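(* Every $\alpha_{2^-}$ topological space is $\alpha_2$.
   Context: Convention: a "sequence" is a countably infinite set. A countably infinite set $A$ in a space $X$ converges to $x\in X$ if $x\notin A$ and every neighborhood of $x$ contains all but finitely many elements of $A$. For a double-indexed family, $\lim_m x_{nm}=x$ means $x_{nm}\neq x$ for all $m$ and every neighborhood of $x$ contains $x_{nm}$ for all but finitely many $m$. A space $X$ is $\alpha_2$ if for each $x\in X$ and all pairwise disjoint sequences $S_1,S_2,\dots\subseteq X$, each converging to $x$, there is a sequence $S\subseteq\bigcup_n S_n$ converging to $x$ such that $S_n\cap S$ is infinite for all $n$. A space $X$ is $\alpha_{2^-}$ if for each $x\in X$, whenever $\lim_m x_{nm}=x$ for all $n\in\mathbb N$, there are $m_1<m_2<\dots$ such that the set $\bigcup_n\{x_{1m_n},\dots,x_{nm_n}\}$ converges to $x$. *)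

theory Defs
  imports "HOL-Analysis.Analysis"
begin

text \<open>A "sequence" is a countably infinite set. It converges to x if x is not in it
and every (open) neighbourhood of x contains all but finitely many of its elements.\<close>
definition seq_converges :: "'a topology \<Rightarrow> 'a set \<Rightarrow> 'a \<Rightarrow> bool" where
  "seq_converges X A x \<longleftrightarrow>
     A \<subseteq> topspace X \<and> countable A \<and> infinite A \<and> x \<in> topspace X \<and> x \<notin> A \<and>
     (\<forall>U. openin X U \<and> x \<in> U \<longrightarrow> finite (A - U))"

definition fam_lim :: "'a topology \<Rightarrow> (nat \<Rightarrow> 'a) \<Rightarrow> 'a \<Rightarrow> bool" where
  "fam_lim X f x \<longleftrightarrow>
     range f \<subseteq> topspace X \<and> x \<in> topspace X \<and> (\<forall>m. f m \<noteq> x) \<and>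
     (\<forall>U. openin X U \<and> x \<in> U \<longrightarrow> finite {m. f m \<notin> U})"

definition alpha2 :: "'a topology \<Rightarrow> bool" where
  "alpha2 X \<longleftrightarrow> (\<forall>x \<in> topspace X. \<forall>S :: nat \<Rightarrow> 'a set.
     (\<forall>n. seq_converges X (S n) x) \<and> (\<forall>i j. i \<noteq> j \<longrightarrow> S i \<inter> S j = {}) \<longrightarrow>
     (\<exists>T. T \<subseteq> (\<Union>n. S n) \<and> seq_converges X T x \<and> (\<forall>n. infinite (T \<inter> S n))))"

text \<open>Indices n, i start at 1 as in the paper; the values x 0 m are irrelevant.\<close>
definition alpha2minus :: "'a topology \<Rightarrow> bool" where
  "alpha2minus X \<longleftrightarrow> (\<forall>x \<in> topspace X. \<forall>xx :: nat \<Rightarrow> nat \<Rightarrow> 'a.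
     (\<forall>n\<ge>1. fam_lim X (xx n) x) \<longrightarrow>
     (\<exists>m :: nat \<Rightarrow> nat. strict_mono m \<and>
        seq_converges X (\<Union>n\<in>{1..}. {xx i (m n) | i. 1 \<le> i \<and> i \<le> n}) x))"

end

theory Submission
  imports Defs
begin

theorem corollary2p4:
  fixes X :: "'a topology"
  assumes "alpha2minus X"
  shows "alpha2 X"
  unfolding alpha2_def
proof (intro ballI allI impI)
  fix x and S :: "nat \<Rightarrow> 'a set"
  assume x: "x \<in> topspace X"
    and hS: "(\<forall>n. seq_converges X (S n) x) \<and> (\<forall>i j. i \<noteq> j \<longrightarrow> S i \<inter> S j = {})"
  define e where "e k = from_nat_into (S k)" for k
  have conv: "\<And>k. seq_converges X (S k) x" using hS by blast
  have bij: "\<And>k. bij_betw (e k) UNIV (S k)"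
    unfolding e_def using conv by (intro bij_betw_from_nat_into) (auto simp: seq_converges_def)
  have inj: "\<And>k. inj (e k)" using bij by (simp add: bij_betw_def)
  have img: "\<And>k. range (e k) = S k" using bij by (simp add: bij_betw_def)
  define xx where "xx n m = e (n - 1) m" for n m
  have fl: "fam_lim X (xx n) x" if "n \<ge> 1" for n
  proof -
    let ?k = "n - 1"
    have c: "seq_converges X (S ?k) x" by (rule conv)
    have r: "range (xx n) = S ?k" using img by (simp add: xx_def)
    show ?thesis unfolding fam_lim_def
    proof (intro conjI allI impI)
      show "range (xx n) \<subseteq> topspace X" using r c by (simp add: seq_converges_def)
      show "x \<in> topspace X" by (rule x)
      fix m show "xx n m \<noteq> x" using r c unfolding seq_converges_def by (metis rangeI)
    next
      fix U assume U: "openin X U \<and> x \<in> U"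
      have "finite (S ?k - U)" using c U by (simp add: seq_converges_def)
      hence "finite (e ?k -` (S ?k - U))" using inj by (rule finite_vimageI)
      moreover have "{m. xx n m \<notin> U} \<subseteq> e ?k -` (S ?k - U)"
        using img[of ?k] by (auto simp: xx_def)
      ultimately show "finite {m. xx n m \<notin> U}" by (rule finite_subset[rotated])
    qed
  qed
  obtain m where m: "strict_mono m"
    and T: "seq_converges X (\<Union>n\<in>{1..}. {xx i (m n) | i. 1 \<le> i \<and> i \<le> n}) x"
    using assms x fl unfolding alpha2minus_def by blast
  let ?T = "\<Union>n\<in>{1..}. {xx i (m n) | i. 1 \<le> i \<and> i \<le> n}"
  show "\<exists>T. T \<subseteq> (\<Union>n. S n) \<and> seq_converges X T x \<and> (\<forall>n. infinite (T \<inter> S n))"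
  proof (intro exI conjI allI)
    show "?T \<subseteq> (\<Union>n. S n)" using img by (auto simp: xx_def) (metis rangeI)
    show "seq_converges X ?T x" by (rule T)
  next
    fix k
    have sub: "(\<lambda>n. e k (m n)) ` {Suc k..} \<subseteq> ?T \<inter> S k"
    proof
      fix y assume "y \<in> (\<lambda>n. e k (m n)) ` {Suc k..}"
      then obtain n where n: "n \<ge> Suc k" "y = e k (m n)" by auto
      have "y \<in> {xx i (m n) | i. 1 \<le> i \<and> i \<le> n}"
        using n by (auto simp: xx_def intro!: exI[of _ "Suc k"])
      moreover have "y \<in> S k" using img n by auto
      ultimately show "y \<in> ?T \<inter> S k" using n by auto
    qed
    have "inj (\<lambda>n. e k (m n))"
      using inj[of k] strict_mono_imp_inj_on[OF m, of UNIV] by (simp add: inj_def inj_on_def)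
    hence "infinite ((\<lambda>n. e k (m n)) ` {Suc k..})"
      by (metis infinite_Ici finite_imageD inj_on_subset subset_UNIV)
    thus "infinite (?T \<inter> S k)" using sub finite_subset by blast
  qed
qed

end
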